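(* Let $G$ be a digraph. (a) Every allowed elementary path $\alpha$ in $G$ can be written as a concatenation $$\alpha=\beta_1*\gamma_1*\beta_2*\gamma_2*\cdots*\beta_{k-1}*\gamma_{k-1}*\beta_k$$ of simplicial allowed elementary paths $\beta_i$ (each $\beta_i$ possibly a single vertex) and directed loops $\gamma_i$; this decomposition is uniquely determined by the following algorithm: writing $\alpha=v_0\cdots v_n$, if all $v_i$ are distinct put $\alpha=\beta_1$; otherwise let $i_1$ be the smallest index such that $v_{i_1}=v_{j_1}$ for some $j_1<i_1$, put $\beta_1=v_0\cdots v_{j_1}$, $\gamma_1=v_{j_1}v_{j_1+1}\cdots v_{i_1}$, and apply the same procedure to $v_{i_1}v_{i_1+1}\cdots v_n$. (b) If $f$ is a discrete Morse function on $G$ and $\alpha$ is non-critical, then in the decomposition of (a) some $\beta_i$ is non-critical.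
   Context: A digraph $G=(V,E)$ consists of a set $V$ and $E\subseteq(V\times V)\setminus\{(v,v)\}$; $(u,v)\in E$ is written $u\to v$. An allowed elementary $n$-path is a sequence $v_0\cdots v_n$ of vertices with $v_{i-1}\to v_i\in E$ for $1\le i\le n$; it is simplicial if all its vertices are distinct. A directed loop is an allowed elementary path $v_0v_1\cdots v_nv_0$ with $n\ge1$. The concatenation of $v_0\cdots v_p$ and $w_0\cdots w_q$ is $v_0\cdots v_pw_1\cdots w_q$ if $v_p=w_0$ (and $0$ otherwise). For allowed elementary paths, $\gamma'<\gamma$ (or $\gamma>\gamma'$) means $\gamma'$ is obtained from $\gamma$ by deleting some entries. A map $f:V\to[0,+\infty)$ is a discrete Morse function on $G$ if for every allowed elementary path $v_0\cdots v_n$: (i) there is at most one index $i$ with $f(v_i)=0$ such that $v_0\cdots v_{i-1}v_{i+1}\cdots v_n$ is an allowed elementary $(n-1)$-path; (ii) there is at most one vertex $u$ with $f(u)=0$ such that for some $-1\le j\le n$ the sequence $v_0\cdots v_juv_{j+1}\cdots v_n$ (meaning $uv_0\cdots v_n$ if $j=-1$, $v_0\cdots v_nu$ if $j=n$) is an allowed elementary $(n+1)$-path. Set $f(v_0\cdots v_n)=\sum_if(v_i)$. An allowed elementary $n$-path $\gamma$ is critical if there is no allowed elementary $(n-1)$-path $\beta<\gamma$ with $f(\beta)=f(\gamma)$ and no allowed elementary $(n+1)$-path $\alpha>\gamma$ with $f(\alpha)=f(\gamma)$; otherwise it is non-critical. *)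

theory Defs
  imports Complex_Main "HOL-Library.Sublist"
begin

text \<open>A digraph: vertex set V, edge set E \<subseteq> V \<times> V without self-loops.
  An elementary n-path v0...vn is represented by the nonempty list [v0,...,vn].\<close>

definition digraph :: "'a set \<Rightarrow> ('a \<times> 'a) set \<Rightarrow> bool" where
  "digraph V E \<longleftrightarrow> E \<subseteq> V \<times> V \<and> (\<forall>v. (v, v) \<notin> E)"

definition allowed_path :: "'a set \<Rightarrow> ('a \<times> 'a) set \<Rightarrow> 'a list \<Rightarrow> bool" where
  "allowed_path V E p \<longleftrightarrow> p \<noteq> [] \<and> set p \<subseteq> V \<and>
     (\<forall>i. Suc i < length p \<longrightarrow> (p ! i, p ! Suc i) \<in> E)"

definition simplicial_path :: "'a set \<Rightarrow> ('a \<times> 'a) set \<Rightarrow> 'a list \<Rightarrow> bool" where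
  "simplicial_path V E p \<longleftrightarrow> allowed_path V E p \<and> distinct p"

definition directed_loop :: "'a set \<Rightarrow> ('a \<times> 'a) set \<Rightarrow> 'a list \<Rightarrow> bool" where
  "directed_loop V E p \<longleftrightarrow> allowed_path V E p \<and> length p \<ge> 3 \<and> hd p = last p"

text \<open>Concatenation of paths (the empty list plays the role of 0).\<close>
definition pcat :: "'a list \<Rightarrow> 'a list \<Rightarrow> 'a list" where
  "pcat p q = (if p \<noteq> [] \<and> q \<noteq> [] \<and> last p = hd q then p @ tl q else [])"

fun assemble :: "'a list list \<Rightarrow> 'a list list \<Rightarrow> 'a list" where
  "assemble [b] [] = b"
| "assemble (b # bs) (g # gs) = pcat (pcat b g) (assemble bs gs)"
| "assemble _ _ = []"

definition first_rep :: "'a list \<Rightarrow> nat" where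
  "first_rep vs = (LEAST i. i < length vs \<and> vs ! i \<in> set (take i vs))"

lemma first_rep_props:
  assumes "\<not> distinct vs"
  shows "0 < first_rep vs \<and> first_rep vs < length vs"
proof -
  obtain i j where ij: "j < i" "i < length vs" "vs ! i = vs ! j"
    using assms by (metis distinct_conv_nth linorder_neqE_nat)
  have ex: "i < length vs \<and> vs ! i \<in> set (take i vs)"
    using ij by (metis in_set_conv_nth length_take min.absorb4 nth_take order.strict_trans)
  then have P: "first_rep vs < length vs \<and> vs ! first_rep vs \<in> set (take (first_rep vs) vs)"
    unfolding first_rep_def by (rule LeastI)
  then have "first_rep vs \<noteq> 0" by (metis empty_iff list.set(1) take0)
  with P show ?thesis by simp
qed

function decomp :: "'a list \<Rightarrow> 'a list list \<times> 'a list list" where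
  "decomp vs =
     (if distinct vs then ([vs], [])
      else (let i = first_rep vs;
                j = (LEAST j. vs ! j = vs ! i);
                r = decomp (drop i vs)
            in (take (Suc j) vs # fst r, drop j (take (Suc i) vs) # snd r)))"
  by pat_completeness auto
termination
  by (relation "measure length") (auto dest: first_rep_props)

definition morse_function :: "'a set \<Rightarrow> ('a \<times> 'a) set \<Rightarrow> ('a \<Rightarrow> real) \<Rightarrow> bool" where
  "morse_function V E f \<longleftrightarrow> (\<forall>v\<in>V. f v \<ge> 0) \<and>
    (\<forall>p. allowed_path V E p \<longrightarrow>
       (\<forall>i i'. (i < length p \<and> f (p ! i) = 0 \<and> allowed_path V E (take i p @ drop (Suc i) p)) \<longrightarrow>
              (i' < length p \<and> f (p ! i') = 0 \<and> allowed_path V E (take i' p @ drop (Suc i') p)) \<longrightarrow>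
              i = i') \<and>
       (\<forall>u u'. (u \<in> V \<and> f u = 0 \<and> (\<exists>j \<le> length p. allowed_path V E (take j p @ u # drop j p))) \<longrightarrow>
              (u' \<in> V \<and> f u' = 0 \<and> (\<exists>j \<le> length p. allowed_path V E (take j p @ u' # drop j p))) \<longrightarrow>
              u = u'))"

definition path_value :: "('a \<Rightarrow> real) \<Rightarrow> 'a list \<Rightarrow> real" where
  "path_value f p = sum_list (map f p)"

definition critical :: "'a set \<Rightarrow> ('a \<times> 'a) set \<Rightarrow> ('a \<Rightarrow> real) \<Rightarrow> 'a list \<Rightarrow> bool" where
  "critical V E f g \<longleftrightarrow>
     \<not> (\<exists>b. allowed_path V E b \<and> Suc (length b) = length g \<and> subseq b g \<and> path_value f b = path_value f g) \<and>
     \<not> (\<exists>a. allowed_path V E a \<and> length a = Suc (length g) \<and> subseq g a \<and> path_value f a = path_value f g)"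

end

theory Submission
  imports Defs
begin



lemma allowed_succ: "allowed_path V E p \<longleftrightarrow> p \<noteq> [] \<and> set p \<subseteq> V \<and> successively (\<lambda>x y. (x,y) \<in> E) p"
  unfolding allowed_path_def successively_conv_nth by auto

lemma succ_mid: "successively P (xs @ y # ys) \<longleftrightarrow> successively P (xs @ [y]) \<and> successively P (y # ys)"
  by (induction xs) (auto simp: successively_Cons hd_append)

lemma allowed_infix: "allowed_path V E (p @ q @ r) \<Longrightarrow> q \<noteq> [] \<Longrightarrow> allowed_path V E q"
  by (auto simp: allowed_succ successively_append_iff)

lemma allowed_prefix: "allowed_path V E (q @ r) \<Longrightarrow> q \<noteq> [] \<Longrightarrow> allowed_path V E q"
  using allowed_infix[of V E "[]" q r] by simp

lemma allowed_suffix: "allowed_path V E (p @ q) \<Longrightarrow> q \<noteq> [] \<Longrightarrow> allowed_path V E q"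
  using allowed_infix[of V E p q "[]"] by simp

lemma subseq_ins: "subseq (xs @ ys) (xs @ y # ys)"
  by (simp add: subseq_append' list_emb_Cons)

lemma pv_ins: "path_value f (xs @ y # ys) = path_value f (xs @ ys) + f y"
  by (simp add: path_value_def)

lemma subseq_one_less:
  "subseq b a \<Longrightarrow> length a = Suc (length b) \<Longrightarrow> \<exists>xs y ys. a = xs @ y # ys \<and> b = xs @ ys"
proof (induction a arbitrary: b)
  case Nil then show ?case by simp
next
  case (Cons z a)
  show ?case
  proof (cases b)
    case Nil then show ?thesis using Cons by auto
  next
    case (Cons w b')
    show ?thesis
    proof (cases "w = z \<and> subseq b' a")
      case True
      then obtain xs y ys where "a = xs @ y # ys" "b' = xs @ ys" using Cons.IH[of b'] Cons.prems Cons by auto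
      then show ?thesis using True Cons by (metis append_Cons)
    next
      case False
      then have "subseq b a" using Cons.prems Cons by (auto split: if_splits)
      then have "b = a" using Cons.prems Cons by (metis length_Cons nat.inject subseq_same_length)
      then show ?thesis by (metis append_Nil)
    qed
  qed
qed


lemma morse_del:
  assumes "morse_function V E f" "allowed_path V E p"
    "i < length p" "f (p ! i) = 0" "allowed_path V E (take i p @ drop (Suc i) p)"
    "i' < length p" "f (p ! i') = 0" "allowed_path V E (take i' p @ drop (Suc i') p)"
  shows "i = i'"
proof -
  have "\<forall>p. allowed_path V E p \<longrightarrow>
       (\<forall>i i'. (i < length p \<and> f (p ! i) = 0 \<and> allowed_path V E (take i p @ drop (Suc i) p)) \<longrightarrow>
              (i' < length p \<and> f (p ! i') = 0 \<and> allowed_path V E (take i' p @ drop (Suc i') p)) \<longrightarrow>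
              i = i')"
    using assms(1) unfolding morse_function_def by blast
  then show ?thesis using assms(2-) by blast
qed

lemma loop_zero:
  assumes m: "morse_function V E f" and a: "allowed_path V E (h # m @ [h])" and x: "x \<in> set (h # m @ [h])"
  shows "f x \<noteq> 0"
proof
  assume fx: "f x = 0"
  obtain r where q: "allowed_path V E (x # r @ [x])"
  proof (cases "x = h")
    case True then show ?thesis using a that by blast
  next
    case False
    then obtain m1 m2 where mm: "m = m1 @ x # m2" using x False by (auto dest: split_list)
    have s: "successively (\<lambda>x y. (x,y) \<in> E) ((h # m1) @ x # (m2 @ [h]))" "set (h # m @ [h]) \<subseteq> V"
      using a unfolding mm allowed_succ by auto
    have "successively (\<lambda>x y. (x,y) \<in> E) ((x # m2) @ h # (m1 @ [x]))"
      using s(1) succ_mid[of _ "h # m1" x "m2 @ [h]"] succ_mid[of _ "x # m2" h "m1 @ [x]"] by simp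
    then have "allowed_path V E (x # (m2 @ [h] @ m1) @ [x])"
      using s(2) unfolding allowed_succ mm by auto
    then show ?thesis using that by blast
  qed
  let ?q = "x # r @ [x]"
  have d0: "allowed_path V E (take 0 ?q @ drop (Suc 0) ?q)" using allowed_suffix[of V E "[x]" "r @ [x]"] q by simp
  have d1: "allowed_path V E (take (Suc (length r)) ?q @ drop (Suc (Suc (length r))) ?q)"
    using allowed_prefix[of V E "x # r" "[x]"] q by simp
  have "0 = Suc (length r)"
    by (rule morse_del[OF m q _ _ d0 _ _ d1]) (simp_all add: fx nth_append)
  then show False by simp
qed



lemma decomp_split:
  assumes nd: "\<not> distinct \<alpha>"
  obtains pre x mid post where "\<alpha> = pre @ x # mid @ x # post"
    "decomp \<alpha> = ((pre @ [x]) # fst (decomp (x # post)), (x # mid @ [x]) # snd (decomp (x # post)))"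
    "distinct (pre @ [x])"
proof -
  define i where "i = first_rep \<alpha>"
  define j where "j = (LEAST j. \<alpha> ! j = \<alpha> ! i)"
  obtain i0 j0 where ij: "j0 < i0" "i0 < length \<alpha>" "\<alpha> ! i0 = \<alpha> ! j0"
    using nd by (metis distinct_conv_nth linorder_neqE_nat)
  have ex: "i0 < length \<alpha> \<and> \<alpha> ! i0 \<in> set (take i0 \<alpha>)"
    using ij by (metis in_set_conv_nth length_take min.absorb4 nth_take)
  then have P: "i < length \<alpha> \<and> \<alpha> ! i \<in> set (take i \<alpha>)"
    unfolding first_rep_def i_def by (rule LeastI)
  have mn: "\<not> (k < length \<alpha> \<and> \<alpha> ! k \<in> set (take k \<alpha>))" if "k < i" for k
    using that unfolding i_def first_rep_def by (rule not_less_Least)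
  obtain j' where j': "j' < i" "\<alpha> ! j' = \<alpha> ! i"
    using P by (auto simp: in_set_conv_nth)
  have jeq: "\<alpha> ! j = \<alpha> ! i" unfolding j_def by (rule LeastI[of _ i]) simp
  have "j \<le> j'" unfolding j_def using j'(2) by (rule Least_le)
  then have ji: "j < i" using j' by simp
  have dti: "distinct (take i \<alpha>)"
  proof (rule ccontr)
    assume "\<not> distinct (take i \<alpha>)"
    then obtain p q where pq: "p < q" "q < length (take i \<alpha>)" "take i \<alpha> ! p = take i \<alpha> ! q"
      by (metis distinct_conv_nth linorder_neqE_nat)
    then have "q < i" "q < length \<alpha>" by auto
    moreover have "\<alpha> ! q \<in> set (take q \<alpha>)"
      using pq by (metis in_set_conv_nth length_take min.absorb4 min_less_iff_conj nth_take order.strict_trans)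
    ultimately show False using mn by blast
  qed
  define pre where "pre = take j \<alpha>"
  define x where "x = \<alpha> ! i"
  define mid where "mid = drop (Suc j) (take i \<alpha>)"
  define post where "post = drop (Suc i) \<alpha>"
  have il: "i < length \<alpha>" using P by simp
  have e1: "take (Suc j) \<alpha> = pre @ [x]"
    using ji il jeq by (simp add: pre_def x_def take_Suc_conv_app_nth)
  have e2: "drop i \<alpha> = x # post"
    using il by (simp add: post_def x_def Cons_nth_drop_Suc)
  have e3: "drop j (take (Suc i) \<alpha>) = x # mid @ [x]"
  proof -
    have "take (Suc i) \<alpha> = take i \<alpha> @ [x]" using il by (simp add: x_def take_Suc_conv_app_nth)
    moreover have "drop j (take i \<alpha>) = take i \<alpha> ! j # drop (Suc j) (take i \<alpha>)" using ji il
      by (intro Cons_nth_drop_Suc[symmetric]) simp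
    ultimately have "drop j (take (Suc i) \<alpha>) = (take i \<alpha> ! j # drop (Suc j) (take i \<alpha>)) @ [x]" using ji il by simp
    then show ?thesis using ji il jeq by (simp add: mid_def x_def)
  qed
  have e4: "\<alpha> = pre @ x # mid @ x # post"
  proof -
    have "\<alpha> = take (Suc j) \<alpha> @ drop (Suc j) \<alpha>" by simp
    also have "drop (Suc j) \<alpha> = mid @ drop i \<alpha>"
      using drop_append[of "Suc j" "take i \<alpha>" "drop i \<alpha>"] ji il by (simp add: mid_def)
    finally show ?thesis using e1 e2 by simp
  qed
  have d: "decomp \<alpha> = (take (Suc j) \<alpha> # fst (decomp (drop i \<alpha>)), drop j (take (Suc i) \<alpha>) # snd (decomp (drop i \<alpha>)))"
    using nd by (subst decomp.simps) (simp add: Let_def i_def j_def del: decomp.simps)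
  have "distinct (take (Suc j) \<alpha>)"
    using dti ji by (metis distinct_take take_take min.absorb1 Suc_leI)
  then have dd: "distinct (pre @ [x])" unfolding e1 .
  have "decomp \<alpha> = ((pre @ [x]) # fst (decomp (x # post)), (x # mid @ [x]) # snd (decomp (x # post)))"
    using d unfolding e1 e2 e3 .
  then show ?thesis using that e4 dd by blast
qed


lemma noncrit_del:
  assumes "allowed_path V E (xs @ ys)" "f y = 0"
  shows "\<not> critical V E f (xs @ y # ys)"
proof -
  have "allowed_path V E (xs @ ys) \<and> Suc (length (xs @ ys)) = length (xs @ y # ys) \<and> subseq (xs @ ys) (xs @ y # ys)
    \<and> path_value f (xs @ ys) = path_value f (xs @ y # ys)"
    using assms subseq_ins[of xs ys y] pv_ins[of f xs y ys] by simp
  then show ?thesis unfolding critical_def by blast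
qed

lemma noncrit_ins:
  assumes "allowed_path V E (xs @ u # ys)" "f u = 0"
  shows "\<not> critical V E f (xs @ ys)"
proof -
  have "allowed_path V E (xs @ u # ys) \<and> length (xs @ u # ys) = Suc (length (xs @ ys)) \<and> subseq (xs @ ys) (xs @ u # ys)
    \<and> path_value f (xs @ u # ys) = path_value f (xs @ ys)"
    using assms subseq_ins[of xs ys u] pv_ins[of f xs u ys] by simp
  then show ?thesis unfolding critical_def by blast
qed

lemma key:
  assumes m: "morse_function V E f" and al: "allowed_path V E (pre @ x # mid @ x # post)"
    and nc: "\<not> critical V E f (pre @ x # mid @ x # post)"
  shows "\<not> critical V E f (pre @ [x]) \<or> \<not> critical V E f (x # post)"
proof -
  have L: "allowed_path V E (x # mid @ [x])"
    using allowed_infix[of V E pre "x # mid @ [x]" post] al by simp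
  have nz: "f z \<noteq> 0" if "z \<in> set (x # mid @ [x])" for z
    using loop_zero[OF m L that] .
  have nzx: "f x \<noteq> 0" using nz by simp
  consider (A) b where "allowed_path V E b" "Suc (length b) = length (pre @ x # mid @ x # post)"
      "subseq b (pre @ x # mid @ x # post)" "path_value f b = path_value f (pre @ x # mid @ x # post)"
    | (B) a where "allowed_path V E a" "length a = Suc (length (pre @ x # mid @ x # post))"
      "subseq (pre @ x # mid @ x # post) a" "path_value f a = path_value f (pre @ x # mid @ x # post)"
    using nc unfolding critical_def by blast
  then show ?thesis
  proof cases
    case (A b)
    then obtain xs y ys where e: "pre @ x # mid @ x # post = xs @ y # ys" and eb: "b = xs @ ys"
      using subseq_one_less[of b "pre @ x # mid @ x # post"] by auto
    have fy: "f y = 0" using A(4) unfolding e eb pv_ins by simp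
    have ab: "allowed_path V E (xs @ ys)" using A(1) eb by simp
    from append_eq_append_conv2[THEN iffD1, OF e[symmetric]] obtain us where
      "(xs = pre @ us \<and> us @ y # ys = x # mid @ x # post) \<or> (xs @ us = pre \<and> y # ys = us @ x # mid @ x # post)"
      by blast
    then show ?thesis
    proof
      assume h: "xs @ us = pre \<and> y # ys = us @ x # mid @ x # post"
      show ?thesis
      proof (cases us)
        case Nil then show ?thesis using h fy nzx by simp
      next
        case (Cons u us')
        then have pre: "pre = xs @ y # us'" and ys: "ys = us' @ x # mid @ x # post" using h by auto
        have "allowed_path V E (xs @ us' @ [x])"
          using allowed_prefix[of V E "xs @ us' @ [x]" "mid @ x # post"] ab ys by simp
        then have "\<not> critical V E f (xs @ y # (us' @ [x]))" using noncrit_del[of V E xs "us' @ [x]" f y] fy by blast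
        then show ?thesis using pre by simp
      qed
    next
      assume h: "xs = pre @ us \<and> us @ y # ys = x # mid @ x # post"
      show ?thesis
      proof (cases us)
        case Nil then show ?thesis using h fy nzx by simp
      next
        case (Cons u us')
        then have xs: "xs = pre @ x # us'" and h2: "us' @ y # ys = mid @ x # post" using h by auto
        from append_eq_append_conv2[THEN iffD1, OF h2] obtain ws where
          "(us' = mid @ ws \<and> ws @ y # ys = x # post) \<or> (us' @ ws = mid \<and> y # ys = ws @ x # post)"
          by blast
        then show ?thesis
        proof
          assume h3: "us' = mid @ ws \<and> ws @ y # ys = x # post"
          show ?thesis
          proof (cases ws)
            case Nil then show ?thesis using h3 fy nzx by simp
          next
            case (Cons w ws')
            then have post: "post = ws' @ y # ys" using h3 by auto
            have "allowed_path V E ((x # ws') @ ys)"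
              using allowed_suffix[of V E "pre @ x # mid" "(x # ws') @ ys"] ab xs h3 Cons by simp
            then have "\<not> critical V E f ((x # ws') @ y # ys)" using noncrit_del[of V E "x # ws'" ys f y] fy by blast
            then show ?thesis using post by simp
          qed
        next
          assume h3: "us' @ ws = mid \<and> y # ys = ws @ x # post"
          show ?thesis
          proof (cases ws)
            case Nil then show ?thesis using h3 fy nzx by simp
          next
            case (Cons w ws')
            then have "y \<in> set mid" using h3 by auto
            then show ?thesis using nz fy by simp
          qed
        qed
      qed
    qed
  next
    case (B a)
    then obtain xs u ys where e: "a = xs @ u # ys" and eb: "pre @ x # mid @ x # post = xs @ ys"
      using subseq_one_less[of "pre @ x # mid @ x # post" a] by auto
    have fu: "f u = 0" using B(4) unfolding e eb pv_ins by simp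
    have aa: "allowed_path V E (xs @ u # ys)" using B(1) e by simp
    have "(\<exists>us. xs @ us = pre \<and> ys = us @ x # mid @ x # post) \<or> (\<exists>us'. xs = pre @ x # us' \<and> us' @ ys = mid @ x # post)"
    proof -
      from append_eq_append_conv2[THEN iffD1, OF eb[symmetric]] obtain us where
        "(xs = pre @ us \<and> us @ ys = x # mid @ x # post) \<or> (xs @ us = pre \<and> ys = us @ x # mid @ x # post)"
        by blast
      then show ?thesis by (cases us) auto
    qed
    then show ?thesis
    proof
      assume "\<exists>us. xs @ us = pre \<and> ys = us @ x # mid @ x # post"
      then obtain us where h: "xs @ us = pre" "ys = us @ x # mid @ x # post" by blast
      have "allowed_path V E (xs @ u # us @ [x])"
        using allowed_prefix[of V E "xs @ u # us @ [x]" "mid @ x # post"] aa h by simp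
      then have "\<not> critical V E f (xs @ (us @ [x]))" using noncrit_ins[of V E xs u "us @ [x]" f] fu by blast
      then show ?thesis unfolding h(1)[symmetric] by simp
    next
      assume "\<exists>us'. xs = pre @ x # us' \<and> us' @ ys = mid @ x # post"
      then obtain us' where xs: "xs = pre @ x # us'" and h2: "us' @ ys = mid @ x # post" by blast
      from append_eq_append_conv2[THEN iffD1, OF h2] obtain ws where
        "(us' = mid @ ws \<and> ws @ ys = x # post) \<or> (us' @ ws = mid \<and> ys = ws @ x # post)"
        by blast
      then show ?thesis
      proof
        assume h3: "us' = mid @ ws \<and> ws @ ys = x # post"
        have "allowed_path V E (ws @ u # ys)"
          using allowed_suffix[of V E "pre @ x # mid" "ws @ u # ys"] aa xs h3 by simp
        then have "\<not> critical V E f (ws @ ys)" using noncrit_ins[of V E ws u ys f] fu by blast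
        then show ?thesis using h3 by simp
      next
        assume h3: "us' @ ws = mid \<and> ys = ws @ x # post"
        have "allowed_path V E (x # (us' @ u # ws) @ [x])"
          using allowed_infix[of V E pre "x # (us' @ u # ws) @ [x]" post] aa xs h3 by simp
        then have "f u \<noteq> 0" using loop_zero[OF m, of x "us' @ u # ws" u] by simp
        then show ?thesis using fu by simp
      qed
    qed
  qed
qed


lemma main_lemma:
  assumes dg: "digraph V E"
  shows "allowed_path V E \<alpha> \<Longrightarrow> length (fst (decomp \<alpha>)) = Suc (length (snd (decomp \<alpha>)))
       \<and> (\<forall>b \<in> set (fst (decomp \<alpha>)). simplicial_path V E b)
       \<and> (\<forall>g \<in> set (snd (decomp \<alpha>)). directed_loop V E g)
       \<and> assemble (fst (decomp \<alpha>)) (snd (decomp \<alpha>)) = \<alpha>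
       \<and> (morse_function V E f \<and> \<not> critical V E f \<alpha> \<longrightarrow>
            (\<exists>b \<in> set (fst (decomp \<alpha>)). \<not> critical V E f b))"
proof (induction "length \<alpha>" arbitrary: \<alpha> rule: less_induct)
  case less
  show ?case
  proof (cases "distinct \<alpha>")
    case True
    have "decomp \<alpha> = ([\<alpha>], [])" using True by (subst decomp.simps) (simp del: decomp.simps)
    then show ?thesis using less.prems True by (simp add: simplicial_path_def)
  next
    case False
    then obtain pre x mid post where e: "\<alpha> = pre @ x # mid @ x # post"
      and d: "decomp \<alpha> = ((pre @ [x]) # fst (decomp (x # post)), (x # mid @ [x]) # snd (decomp (x # post)))"
      and dd: "distinct (pre @ [x])"
      by (rule decomp_split)
    have a\<rho>: "allowed_path V E (x # post)"
      using allowed_suffix[of V E "pre @ x # mid" "x # post"] less.prems e by simp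
    have "length (x # post) < length \<alpha>" using e by simp
    note IH = less.hyps[OF this a\<rho>]
    have L: "allowed_path V E (x # mid @ [x])"
      using allowed_infix[of V E pre "x # mid @ [x]" post] less.prems e by simp
    have "mid \<noteq> []"
    proof
      assume "mid = []"
      then have "(x, x) \<in> E" using L by (simp add: allowed_path_def)
      then show False using dg by (simp add: digraph_def)
    qed
    then have loop: "directed_loop V E (x # mid @ [x])"
      using L by (cases mid) (simp_all add: directed_loop_def)
    have beta: "simplicial_path V E (pre @ [x])"
      using allowed_prefix[of V E "pre @ [x]" "mid @ x # post"] less.prems e dd
      by (simp add: simplicial_path_def)
    have asm: "assemble (fst (decomp \<alpha>)) (snd (decomp \<alpha>)) = \<alpha>"
    proof -
      have "assemble (fst (decomp \<alpha>)) (snd (decomp \<alpha>))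
          = pcat (pcat (pre @ [x]) (x # mid @ [x])) (assemble (fst (decomp (x # post))) (snd (decomp (x # post))))"
        using d by simp
      also have "\<dots> = pcat (pcat (pre @ [x]) (x # mid @ [x])) (x # post)" using IH by simp
      also have "\<dots> = \<alpha>" using e by (simp add: pcat_def)
      finally show ?thesis .
    qed
    have crit: "morse_function V E f \<and> \<not> critical V E f \<alpha> \<longrightarrow>
            (\<exists>b \<in> set (fst (decomp \<alpha>)). \<not> critical V E f b)"
    proof
      assume h: "morse_function V E f \<and> \<not> critical V E f \<alpha>"
      then have "\<not> critical V E f (pre @ [x]) \<or> \<not> critical V E f (x # post)"
        using key[of V E f pre x mid post] less.prems e by simp
      then show "\<exists>b \<in> set (fst (decomp \<alpha>)). \<not> critical V E f b"
        using IH h d by auto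
    qed
    show ?thesis using IH d loop beta asm crit by simp
  qed
qed

theorem lemma4p5:
  fixes V :: "'a set" and E :: "('a \<times> 'a) set" and f :: "'a \<Rightarrow> real" and \<alpha> :: "'a list"
  assumes "digraph V E" and "allowed_path V E \<alpha>"
  shows "length (fst (decomp \<alpha>)) = Suc (length (snd (decomp \<alpha>)))
       \<and> (\<forall>b \<in> set (fst (decomp \<alpha>)). simplicial_path V E b)
       \<and> (\<forall>g \<in> set (snd (decomp \<alpha>)). directed_loop V E g)
       \<and> assemble (fst (decomp \<alpha>)) (snd (decomp \<alpha>)) = \<alpha>
       \<and> (morse_function V E f \<and> \<not> critical V E f \<alpha> \<longrightarrow>
            (\<exists>b \<in> set (fst (decomp \<alpha>)). \<not> critical V E f b))"
  using main_lemma[OF assms(1) assms(2)] .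

end
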